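(* Let $\mathcal{N}=(D,P)$ be a broadcast network with client $P=(Q,I,\delta)$, let $F\subseteq Q$, and let $\mathcal{N}_F$ be the instrumented network. For configurations $c_0,c\in Q^k$: there is a computation $c_0\to^* c\Rightarrow_F c$ in $\mathcal{N}$ if and only if there is a computation $\tilde c_0\to^* c\to^+ c$ in $\mathcal{N}_F$, where $\tilde c_0\in\tilde Q^k$ is defined by $\tilde c_0[i]=\widetilde{c_0[i]}$.
   Context: A broadcast network is a pair $\mathcal{N}=(D,P)$ where $D$ is a finite set of messages and $P=(Q,I,\delta)$ is a finite automaton with $\delta\subseteq Q\times\mathrm{Ops}(D)\times Q$, $\mathrm{Ops}(D)=\{!a,\ ?a: a\in D\}$. A configuration is $c\in Q^k$ for some $k$, with entries $c[i]$. For $c,c'\in Q^k$ and $a\in D$, $c\xrightarrow{a}c'$ holds if there is $i$ with $(c[i],!a,c'[i])\in\delta$, a set $R\subseteq[1..k]\setminus\{i\}$ with $(c[j],?a,c'[j])\in\delta$ for $j\in R$, and $c[j]=c'[j]$ for $j\notin R\cup\{i\}$; then $\mathrm{type}(c\xrightarrow{a}c')=R\cup\{i\}$. $\to^*$ (resp. $\to^+$) means zero or more (resp. at least one) transitions. A finite computation $c_1\to\cdots\to c_n$ with $n\ge2$ is good for $F$, written $c_1\Rightarrow_F c_n$, if every client $i$ with $i\in\mathrm{type}(c_j\to c_{j+1})$ for some $j$ satisfies $c_k[i]\in F$ for some $k\in[1..n]$. The instrumented network is $\mathcal{N}_F=(D\cup\{n\},P_F)$ with a fresh message $n\notin D$ and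 client $P_F=(\bar Q,\tilde I,\bar\delta)$, where $\bar Q=Q\cup\hat Q\cup\tilde Q$ with $\hat Q=\{\hat q: q\in Q\}$ and $\tilde Q=\{\tilde q: q\in Q\}$ two disjoint copies of $Q$, $\tilde I=\{\tilde q: q\in I\}$, and $\bar\delta$ contains exactly: for every $(q,o,q')\in\delta$ the transitions $(q,o,\hat q')$, $(\hat q,o,\hat q')$, $(\tilde q,o,\tilde q')$; for every $q\in F$ the transition $(\hat q,!n,\tilde q)$; for every $q\in Q$ the transition $(\tilde q,!n,q)$. *)

theory Defs
  imports Main
begin

datatype 'd bop = Snd 'd | Rcv 'd

definition Ops :: "'d set \<Rightarrow> 'd bop set" where
  "Ops D = Snd ` D \<union> Rcv ` D"

text \<open>A transition of the network with message a and type T (= R \<union> {i}):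
  the configuration is a list of client states; indices are 0-based.\<close>
definition step_type ::
  "('q \<times> 'd bop \<times> 'q) set \<Rightarrow> 'q list \<Rightarrow> 'd \<Rightarrow> nat set \<Rightarrow> 'q list \<Rightarrow> bool" where
  "step_type \<delta> c a T c' \<longleftrightarrow>
     length c' = length c \<and>
     (\<exists>i R. i < length c \<and> R \<subseteq> {..<length c} - {i} \<and> T = R \<union> {i} \<and>
        (c ! i, Snd a, c' ! i) \<in> \<delta> \<and>
        (\<forall>j\<in>R. (c ! j, Rcv a, c' ! j) \<in> \<delta>) \<and>
        (\<forall>j<length c. j \<notin> R \<union> {i} \<longrightarrow> c ! j = c' ! j))"

definition step :: "('q \<times> 'd bop \<times> 'q) set \<Rightarrow> 'q list \<Rightarrow> 'q list \<Rightarrow> bool" where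
  "step \<delta> c c' \<longleftrightarrow> (\<exists>a T. step_type \<delta> c a T c')"

definition good :: "('q \<times> 'd bop \<times> 'q) set \<Rightarrow> 'q set \<Rightarrow> 'q list \<Rightarrow> 'q list \<Rightarrow> bool" where
  "good \<delta> F c c' \<longleftrightarrow>
     (\<exists>cs ls. length cs \<ge> 2 \<and> length ls = length cs - 1 \<and>
        hd cs = c \<and> last cs = c' \<and>
        (\<forall>j < length ls. step_type \<delta> (cs ! j) (fst (ls ! j)) (snd (ls ! j)) (cs ! Suc j)) \<and>
        (\<forall>j < length ls. \<forall>i \<in> snd (ls ! j). \<exists>k < length cs. cs ! k ! i \<in> F))"

text \<open>States of P_F: Q, \<hat>Q, \<tilde>Q; messages: D \<union> {n}, with n represented by None.\<close>
datatype 'q istate = Plain 'q | Hat 'q | Tilde 'q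

definition inst_delta ::
  "'q set \<Rightarrow> ('q \<times> 'd bop \<times> 'q) set \<Rightarrow> 'q set \<Rightarrow> ('q istate \<times> 'd option bop \<times> 'q istate) set" where
  "inst_delta Q \<delta> F =
     {(Plain q, map_bop Some op, Hat q') | q op q'. (q, op, q') \<in> \<delta>} \<union>
     {(Hat q, map_bop Some op, Hat q') | q op q'. (q, op, q') \<in> \<delta>} \<union>
     {(Tilde q, map_bop Some op, Tilde q') | q op q'. (q, op, q') \<in> \<delta>} \<union>
     {(Hat q, Snd None, Tilde q) | q. q \<in> F} \<union>
     {(Tilde q, Snd None, Plain q) | q. q \<in> Q}"

end

theory Submission imports Defs begin

fun proj :: "'q istate \<Rightarrow> 'q" where
  "proj (Plain q) = q" | "proj (Hat q) = q" | "proj (Tilde q) = q"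

fun lift :: "'q istate \<Rightarrow> 'q \<Rightarrow> 'q istate" where
  "lift (Tilde _) q = Tilde q" | "lift (Plain _) q = Hat q" | "lift (Hat _) q = Hat q"

lemma lift_tr:
  assumes "(proj y, op, q') \<in> \<delta>"
  shows "(y, map_bop Some op, lift y q') \<in> inst_delta Q \<delta> F"
  using assms by (cases y) (auto simp: inst_delta_def)

lemma map_bop_Some_Snd: "map_bop Some op = Snd (Some a) \<longleftrightarrow> op = Snd a"
  by (cases op) auto
lemma map_bop_Some_Rcv: "map_bop Some op = Rcv (Some a) \<longleftrightarrow> op = Rcv a"
  by (cases op) auto
lemma map_bop_Some_None: "map_bop Some op \<noteq> Rcv None" "map_bop Some op \<noteq> Snd None"
  by (cases op; auto)+

lemma inst_Snd:
  assumes "(y, Snd (Some a), y') \<in> inst_delta Q \<delta> F"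
  shows "(proj y, Snd a, proj y') \<in> \<delta> \<and> y' = lift y (proj y')"
  using assms unfolding inst_delta_def by (auto simp: eq_commute[of "Snd (Some a)"] map_bop_Some_Snd)

lemma inst_Rcv:
  assumes "(y, Rcv (Some a), y') \<in> inst_delta Q \<delta> F"
  shows "(proj y, Rcv a, proj y') \<in> \<delta> \<and> y' = lift y (proj y')"
  using assms unfolding inst_delta_def by (auto simp: eq_commute[of "Rcv (Some a)"] map_bop_Some_Rcv)

lemma inst_None:
  assumes "(y, Snd None, y') \<in> inst_delta Q \<delta> F"
  shows "(\<exists>q. y = Hat q \<and> q \<in> F \<and> y' = Tilde q) \<or> (\<exists>q. y = Tilde q \<and> y' = Plain q)"
  using assms unfolding inst_delta_def by (auto simp: eq_commute[of "Snd None"] map_bop_Some_None)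

lemma no_rcv_None: "(y, Rcv None, y') \<notin> inst_delta Q \<delta> F"
  unfolding inst_delta_def using map_bop_Some_None by (auto simp: eq_commute[of "Rcv None"])

lemma lift_step:
  assumes "step_type \<delta> (map proj x) a T c'"
  defines "x' \<equiv> map (\<lambda>j. if j \<in> T then lift (x!j) (c'!j) else x!j) [0..<length x]"
  shows "step_type (inst_delta Q \<delta> F) x (Some a) T x' \<and> map proj x' = c'"
proof -
  obtain i R where l: "length c' = length x" and i: "i < length x" and R: "R \<subseteq> {..<length x} - {i}"
    and T: "T = R \<union> {i}" and si: "(proj (x!i), Snd a, c'!i) \<in> \<delta>"
    and sR: "\<forall>j\<in>R. (proj (x!j), Rcv a, c'!j) \<in> \<delta>"
    and sO: "\<forall>j<length x. j \<notin> R \<union> {i} \<longrightarrow> proj (x!j) = c'!j"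
  proof -
    from assms(1) obtain i R where "length c' = length x" "i < length x" "R \<subseteq> {..<length x} - {i}"
      "T = R \<union> {i}" "(map proj x ! i, Snd a, c'!i) \<in> \<delta>"
      "\<forall>j\<in>R. (map proj x ! j, Rcv a, c'!j) \<in> \<delta>"
      "\<forall>j<length x. j \<notin> R \<union> {i} \<longrightarrow> map proj x ! j = c'!j"
      unfolding step_type_def by auto
    then show thesis by (intro that[of i R]) (auto simp: subset_iff)
  qed
  have lx: "length x' = length x" by (simp add: x'_def)
  have nx: "\<And>j. j < length x \<Longrightarrow> x'!j = (if j \<in> T then lift (x!j) (c'!j) else x!j)"
    by (simp add: x'_def)
  have pl: "\<And>y q. proj (lift y q) = q" by (case_tac y) auto
  have "map proj x' = c'"
    by (rule nth_equalityI) (use l lx nx pl sO T in auto)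
  moreover have "step_type (inst_delta Q \<delta> F) x (Some a) T x'"
    unfolding step_type_def
  proof (intro conjI exI[of _ i] exI[of _ R])
    show "(x ! i, Snd (Some a), x' ! i) \<in> inst_delta Q \<delta> F"
      using lift_tr[OF si, of Q F] nx[OF i] T by simp
    show "\<forall>j\<in>R. (x ! j, Rcv (Some a), x' ! j) \<in> inst_delta Q \<delta> F"
      using lift_tr[of _ "Rcv a" _ \<delta> Q F] sR nx R T by auto
    show "\<forall>j<length x. j \<notin> R \<union> {i} \<longrightarrow> x ! j = x' ! j" using nx T by auto
  qed (use lx i R T in auto)
  ultimately show ?thesis by simp
qed

lemma proj_step:
  assumes "step_type (inst_delta Q \<delta> F) x (Some a) T x'"
  shows "step_type \<delta> (map proj x) a T (map proj x') \<and> length x' = length x \<and>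
    (\<forall>j<length x. (j \<in> T \<longrightarrow> x'!j = lift (x!j) (proj (x'!j))) \<and> (j \<notin> T \<longrightarrow> x'!j = x!j))"
proof -
  obtain i R where l: "length x' = length x" and i: "i < length x" and R: "R \<subseteq> {..<length x} - {i}"
    and T: "T = R \<union> {i}" and si: "(x!i, Snd (Some a), x'!i) \<in> inst_delta Q \<delta> F"
    and sR: "\<forall>j\<in>R. (x!j, Rcv (Some a), x'!j) \<in> inst_delta Q \<delta> F"
    and sO: "\<forall>j<length x. j \<notin> R \<union> {i} \<longrightarrow> x!j = x'!j"
    using assms(1) unfolding step_type_def by auto
  have si1: "(proj (x!i), Snd a, proj (x'!i)) \<in> \<delta>" and si2: "x'!i = lift (x!i) (proj (x'!i))"
    using inst_Snd[OF si] by blast+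
  have sR1: "\<forall>j\<in>R. (proj (x!j), Rcv a, proj (x'!j)) \<in> \<delta>"
    and sR2: "\<forall>j\<in>R. x'!j = lift (x!j) (proj (x'!j))"
  proof -
    have "(proj (x!j), Rcv a, proj (x'!j)) \<in> \<delta> \<and> x'!j = lift (x!j) (proj (x'!j))" if "j \<in> R" for j
      using inst_Rcv[of "x!j" a "x'!j" Q \<delta> F] sR that by blast
    then show "\<forall>j\<in>R. (proj (x!j), Rcv a, proj (x'!j)) \<in> \<delta>" "\<forall>j\<in>R. x'!j = lift (x!j) (proj (x'!j))"
      by blast+
  qed
  have "step_type \<delta> (map proj x) a T (map proj x')"
    unfolding step_type_def
    apply (rule conjI)
     apply (simp add: l)
    apply (rule exI[of _ i], rule exI[of _ R])
    using l i R T si1 sR1 sO by (auto simp: subset_iff)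
  moreover have "\<forall>j<length x. (j \<in> T \<longrightarrow> x'!j = lift (x!j) (proj (x'!j))) \<and> (j \<notin> T \<longrightarrow> x'!j = x!j)"
  proof (intro allI impI conjI)
    fix j assume j: "j < length x"
    show "j \<in> T \<Longrightarrow> x'!j = lift (x!j) (proj (x'!j))"
    proof -
      assume "j \<in> T"
      then consider "j = i" | "j \<in> R" using T by blast
      then show ?thesis using si2 sR2 by cases auto
    qed
    show "j \<notin> T \<Longrightarrow> x'!j = x!j" using sO j T by simp
  qed
  ultimately show ?thesis using l by (intro conjI) auto
qed

lemma none_step:
  assumes "step_type (inst_delta Q \<delta> F) x None T x'"
  shows "\<exists>i. i < length x \<and> T = {i} \<and> length x' = length x \<and> (\<forall>j<length x. j \<noteq> i \<longrightarrow> x'!j = x!j) \<and>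
     ((\<exists>q. x!i = Hat q \<and> q \<in> F \<and> x'!i = Tilde q) \<or> (\<exists>q. x!i = Tilde q \<and> x'!i = Plain q))"
proof -
  obtain i R where l: "length x' = length x" and i: "i < length x" and R: "R \<subseteq> {..<length x} - {i}"
    and T: "T = R \<union> {i}" and si: "(x!i, Snd None, x'!i) \<in> inst_delta Q \<delta> F"
    and sR: "\<forall>j\<in>R. (x!j, Rcv None, x'!j) \<in> inst_delta Q \<delta> F"
    and sO: "\<forall>j<length x. j \<notin> R \<union> {i} \<longrightarrow> x!j = x'!j"
    using assms(1) unfolding step_type_def by auto
  have R0: "R = {}" using sR no_rcv_None by blast
  have "(\<exists>q. x!i = Hat q \<and> q \<in> F \<and> x'!i = Tilde q) \<or> (\<exists>q. x!i = Tilde q \<and> x'!i = Plain q)"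
    using inst_None[OF si] by blast
  moreover have "\<forall>j<length x. j \<noteq> i \<longrightarrow> x'!j = x!j" using sO R0 by simp
  ultimately show ?thesis using i T R0 l by blast
qed

lemma step_type_facts:
  "step_type \<delta> c a T c' \<Longrightarrow> length c' = length c \<and> T \<subseteq> {..<length c} \<and> (\<forall>j<length c. j \<notin> T \<longrightarrow> c!j = c'!j)"
  unfolding step_type_def by auto

lemma single_step:
  assumes "i < length z" "(z!i, Snd a, y) \<in> \<Delta>"
  shows "step \<Delta> z (z[i := y])"
  unfolding step_def step_type_def
  apply (rule exI[of _ a], rule exI[of _ "{i}"], rule conjI, simp)
  apply (rule exI[of _ i], rule exI[of _ "{}"])
  using assms by (auto simp: nth_list_update)

lemma conv_all:
  assumes H: "\<And>z i. i < length z \<Longrightarrow> g (z!i) \<noteq> z!i \<Longrightarrow> step \<Delta> z (z[i := g (z!i)])"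
  shows "(step \<Delta>)\<^sup>*\<^sup>* x (map g x)"
proof -
  have "k \<le> length x \<Longrightarrow> (step \<Delta>)\<^sup>*\<^sup>* x (map g (take k x) @ drop k x)" for k
  proof (induction k)
    case 0 show ?case by simp
  next
    case (Suc k)
    let ?z = "map g (take k x) @ drop k x"
    have k: "k < length x" using Suc by simp
    have zk: "?z ! k = x!k" using k by (simp add: nth_append)
    have eq: "?z[k := g (x!k)] = map g (take (Suc k) x) @ drop (Suc k) x"
      using k by (simp add: take_Suc_conv_app_nth[OF k] list_update_append Cons_nth_drop_Suc[OF k, symmetric])
    have IH: "(step \<Delta>)\<^sup>*\<^sup>* x ?z" using Suc by simp
    show ?case
    proof (cases "g (x!k) = x!k")
      case True
      then have "?z[k := g (x!k)] = ?z" using zk by (metis list_update_id)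
      then show ?thesis using IH eq by simp
    next
      case False
      have "step \<Delta> ?z (?z[k := g (?z!k)])" using H[of k ?z] k False zk by simp
      then have "step \<Delta> ?z (map g (take (Suc k) x) @ drop (Suc k) x)" using eq zk by simp
      with IH show ?thesis by (rule rtranclp.rtrancl_into_rtrancl)
    qed
  qed
  from this[of "length x"] show ?thesis by simp
qed

definition gfin :: "'q set \<Rightarrow> 'q istate \<Rightarrow> 'q istate" where
  "gfin Q y = (case y of Tilde q \<Rightarrow> if q \<in> Q then Plain q else y | _ \<Rightarrow> y)"
definition ggr :: "'q set \<Rightarrow> 'q istate \<Rightarrow> 'q istate" where
  "ggr F y = (case y of Hat q \<Rightarrow> if q \<in> F then Tilde q else y | _ \<Rightarrow> y)"

lemma fin_steps: "(step (inst_delta Q \<delta> F))\<^sup>*\<^sup>* x (map (gfin Q) x)"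
proof (rule conv_all)
  fix z :: "'a istate list" and i assume i: "i < length z" and ne: "gfin Q (z!i) \<noteq> z!i"
  then obtain q where "z!i = Tilde q" "q \<in> Q" by (cases "z!i") (auto simp: gfin_def split: if_splits)
  moreover have "(Tilde q, Snd None, Plain q) \<in> inst_delta Q \<delta> F" using \<open>q \<in> Q\<close> by (simp add: inst_delta_def)
  ultimately show "step (inst_delta Q \<delta> F) z (z[i := gfin Q (z!i)])"
    using single_step[OF i, of None "Plain q"] by (simp add: gfin_def)
qed

lemma gr_steps: "(step (inst_delta Q \<delta> F))\<^sup>*\<^sup>* x (map (ggr F) x)"
proof (rule conv_all)
  fix z :: "'a istate list" and i assume i: "i < length z" and ne: "ggr F (z!i) \<noteq> z!i"
  then obtain q where "z!i = Hat q" "q \<in> F" by (cases "z!i") (auto simp: ggr_def split: if_splits)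
  moreover have "(Hat q, Snd None, Tilde q) \<in> inst_delta Q \<delta> F" using \<open>q \<in> F\<close> by (simp add: inst_delta_def)
  ultimately show "step (inst_delta Q \<delta> F) z (z[i := ggr F (z!i)])"
    using single_step[OF i, of None "Tilde q"] by (simp add: ggr_def)
qed

lemma proj_ggr[simp]: "proj (ggr F y) = proj y" by (cases y) (auto simp: ggr_def)
lemma proj_gfin[simp]: "proj (gfin Q y) = proj y" by (cases y) (auto simp: gfin_def)
lemma proj_lift[simp]: "proj (lift y q) = q" by (cases y) auto
lemma lift_not_Plain[simp]: "lift y q \<noteq> Plain p" by (cases y) auto
lemma map_proj_Tilde[simp]: "map proj (map Tilde y) = y" by (simp add: comp_def)
lemma map_proj_Plain[simp]: "map proj (map Plain y) = y" by (simp add: comp_def)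

lemma tilde_run:
  "(step \<delta>)\<^sup>*\<^sup>* c0 c \<Longrightarrow> (step (inst_delta Q \<delta> F))\<^sup>*\<^sup>* (map Tilde c0) (map Tilde c)"
proof (induction rule: rtranclp_induct)
  case base show ?case by simp
next
  case (step y z)
  obtain a T where st: "step_type \<delta> y a T z" using step.hyps(2) unfolding step_def by blast
  have st': "step_type \<delta> (map proj (map Tilde y)) a T z" using st by (simp add: comp_def)
  define x' where "x' = map (\<lambda>j. if j \<in> T then lift (map Tilde y ! j) (z!j) else map Tilde y ! j) [0..<length (map Tilde y)]"
  from lift_step[OF st', of Q F] have s: "step_type (inst_delta Q \<delta> F) (map Tilde y) (Some a) T x'"
    and p: "map proj x' = z" unfolding x'_def by auto
  have "x' = map Tilde z"
  proof (rule nth_equalityI)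
    have "length x' = length z" using p by auto
    then show "length x' = length (map Tilde z)" by simp
    fix j assume j: "j < length x'"
    then have "j < length y" by (simp add: x'_def)
    then have "\<exists>q. x'!j = Tilde q" by (simp add: x'_def)
    then obtain q where q: "x'!j = Tilde q" by blast
    have "proj (x'!j) = z!j" using p j by (metis nth_map)
    then show "x'!j = map Tilde z ! j" using q j \<open>length x' = length z\<close> by simp
  qed
  with s have "step (inst_delta Q \<delta> F) (map Tilde y) (map Tilde z)" unfolding step_def by blast
  with step.IH show ?case by (rule rtranclp.rtrancl_into_rtrancl)
qed

lemma proj_run:
  "(step (inst_delta Q \<delta> F))\<^sup>*\<^sup>* x y \<Longrightarrow> (step \<delta>)\<^sup>*\<^sup>* (map proj x) (map proj y)"
proof (induction rule: rtranclp_induct)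
  case base show ?case by simp
next
  case (step y z)
  obtain a T where st: "step_type (inst_delta Q \<delta> F) y a T z" using step.hyps(2) unfolding step_def by blast
  show ?case
  proof (cases a)
    case None
    from none_step[OF st[unfolded None]] obtain i where i: "i < length y" and l: "length z = length y"
      and o: "\<forall>j<length y. j \<noteq> i \<longrightarrow> z!j = y!j" and pi: "proj (z!i) = proj (y!i)" by auto
    have "map proj z = map proj y"
    proof (rule nth_equalityI)
      show "length (map proj z) = length (map proj y)" using l by simp
      fix j assume "j < length (map proj z)"
      then show "map proj z ! j = map proj y ! j" using l o pi by (cases "j = i") auto
    qed
    then show ?thesis using step.IH by simp
  next
    case (Some b)
    from proj_step[OF st[unfolded Some]] have "step \<delta> (map proj y) (map proj z)"
      unfolding step_def by blast
    with step.IH show ?thesis by (rule rtranclp.rtrancl_into_rtrancl)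
  qed
qed

lemma lift_cases:
  "w = lift y p \<Longrightarrow> (\<exists>r. y = Tilde r \<and> w = Tilde p) \<or> ((\<forall>r. y \<noteq> Tilde r) \<and> w = Hat p)"
  by (cases y) auto

lemma conv:
  assumes "(step (inst_delta Q \<delta> F))\<^sup>*\<^sup>* x y"
  shows "\<exists>cs ls. length cs = Suc (length ls) \<and> hd cs = map proj x \<and> last cs = map proj y \<and> length y = length x \<and>
    (\<forall>j<length ls. step_type \<delta> (cs!j) (fst (ls!j)) (snd (ls!j)) (cs!Suc j)) \<and>
    (\<forall>i<length x. (\<forall>q. y!i \<noteq> Hat q) \<longrightarrow>
        ((\<exists>q. x!i = Hat q) \<or> ((\<exists>q. x!i = Plain q) \<and> ((\<exists>j<length ls. i \<in> snd (ls!j)) \<or> (\<exists>q. y!i = Tilde q)))) \<longrightarrow>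
        (\<exists>k<length cs. cs!k!i \<in> F))"
  using assms
proof (induction rule: rtranclp_induct)
  case base
  show ?case by (rule exI[of _ "[map proj x]"], rule exI[of _ "[]"]) auto
next
  case (step y z)
  from step.IH obtain cs ls where l1: "length cs = Suc (length ls)" and hd1: "hd cs = map proj x"
    and last1: "last cs = map proj y" and ly: "length y = length x"
    and st1: "\<forall>j<length ls. step_type \<delta> (cs!j) (fst (ls!j)) (snd (ls!j)) (cs!Suc j)"
    and V1: "\<forall>i<length x. (\<forall>q. y!i \<noteq> Hat q) \<longrightarrow>
        ((\<exists>q. x!i = Hat q) \<or> ((\<exists>q. x!i = Plain q) \<and> ((\<exists>j<length ls. i \<in> snd (ls!j)) \<or> (\<exists>q. y!i = Tilde q)))) \<longrightarrow>
        (\<exists>k<length cs. cs!k!i \<in> F)"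
    by blast
  from step.hyps(2) obtain a T where sty: "step_type (inst_delta Q \<delta> F) y a T z" unfolding step_def by blast
  have csne: "cs \<noteq> []" using l1 by auto
  show ?case
  proof (cases a)
    case None
    from none_step[OF sty[unfolded None]] obtain i0 where i0: "i0 < length y" and lz: "length z = length y"
      and o: "\<forall>j<length y. j \<noteq> i0 \<longrightarrow> z!j = y!j"
      and cs: "(\<exists>q. y!i0 = Hat q \<and> q \<in> F \<and> z!i0 = Tilde q) \<or> (\<exists>q. y!i0 = Tilde q \<and> z!i0 = Plain q)"
      by blast
    have pi: "proj (z!i0) = proj (y!i0)" using cs by auto
    have pz: "map proj z = map proj y"
    proof (rule nth_equalityI)
      show "length (map proj z) = length (map proj y)" using lz by simp
      fix j assume "j < length (map proj z)"
      then show "map proj z ! j = map proj y ! j" using lz o pi by (cases "j = i0") auto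
    qed
    have V: "\<forall>i<length x. (\<forall>q. z!i \<noteq> Hat q) \<longrightarrow>
        ((\<exists>q. x!i = Hat q) \<or> ((\<exists>q. x!i = Plain q) \<and> ((\<exists>j<length ls. i \<in> snd (ls!j)) \<or> (\<exists>q. z!i = Tilde q)))) \<longrightarrow>
        (\<exists>k<length cs. cs!k!i \<in> F)"
    proof (intro allI impI)
      fix i assume i: "i < length x" and nh: "\<forall>q. z!i \<noteq> Hat q"
        and pre: "(\<exists>q. x!i = Hat q) \<or> ((\<exists>q. x!i = Plain q) \<and> ((\<exists>j<length ls. i \<in> snd (ls!j)) \<or> (\<exists>q. z!i = Tilde q)))"
      show "\<exists>k<length cs. cs!k!i \<in> F"
      proof (cases "i = i0")
        case False
        then have zy: "z!i = y!i" using o i ly by simp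
        have nhy: "\<forall>q. y!i \<noteq> Hat q" using nh zy by simp
        have prey: "(\<exists>q. x!i = Hat q) \<or> ((\<exists>q. x!i = Plain q) \<and> ((\<exists>j<length ls. i \<in> snd (ls!j)) \<or> (\<exists>q. y!i = Tilde q)))"
          using pre zy by simp
        show ?thesis using V1 i nhy prey by blast
      next
        case True
        show ?thesis
        proof (cases "\<exists>q. y!i0 = Hat q \<and> q \<in> F \<and> z!i0 = Tilde q")
          case True
          then obtain q where q: "y!i0 = Hat q" "q \<in> F" by blast
          have "cs ! (length cs - 1) = map proj y" using last1 csne by (simp add: last_conv_nth)
          then have "cs ! (length cs - 1) ! i0 = q" using q i0 by simp
          then show ?thesis using q \<open>i = i0\<close> l1 by (intro exI[of _ "length cs - 1"]) auto
        next
          case False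
          then obtain q where q: "y!i0 = Tilde q" using cs by blast
          then show ?thesis using V1 i pre \<open>i = i0\<close> by auto
        qed
      qed
    qed
    show ?thesis
      by (rule exI[of _ cs], rule exI[of _ ls]) (use l1 hd1 last1 ly lz pz st1 V in auto)
  next
    case (Some b)
    from proj_step[OF sty[unfolded Some]] have sd: "step_type \<delta> (map proj y) b T (map proj z)"
      and lz: "length z = length y"
      and desc: "\<forall>j<length y. (j \<in> T \<longrightarrow> z!j = lift (y!j) (proj (z!j))) \<and> (j \<notin> T \<longrightarrow> z!j = y!j)"
      by blast+
    define cs' where "cs' = cs @ [map proj z]"
    define ls' where "ls' = ls @ [(b, T)]"
    have l2: "length cs' = Suc (length ls')" using l1 by (simp add: cs'_def ls'_def)
    have hd2: "hd cs' = map proj x" using hd1 csne by (simp add: cs'_def)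
    have last2: "last cs' = map proj z" by (simp add: cs'_def)
    have csl: "cs ! length ls = map proj y" using last1 csne l1 by (simp add: last_conv_nth)
    have st2: "\<forall>j<length ls'. step_type \<delta> (cs'!j) (fst (ls'!j)) (snd (ls'!j)) (cs'!Suc j)"
    proof (intro allI impI)
      fix j assume j: "j < length ls'"
      show "step_type \<delta> (cs'!j) (fst (ls'!j)) (snd (ls'!j)) (cs'!Suc j)"
      proof (cases "j < length ls")
        case True
        then show ?thesis using st1 l1 by (simp add: cs'_def ls'_def nth_append)
      next
        case False
        then have "j = length ls" using j by (simp add: ls'_def)
        then show ?thesis using sd csl l1 by (simp add: cs'_def ls'_def nth_append)
      qed
    qed
    have V: "\<forall>i<length x. (\<forall>q. z!i \<noteq> Hat q) \<longrightarrow>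
        ((\<exists>q. x!i = Hat q) \<or> ((\<exists>q. x!i = Plain q) \<and> ((\<exists>j<length ls'. i \<in> snd (ls'!j)) \<or> (\<exists>q. z!i = Tilde q)))) \<longrightarrow>
        (\<exists>k<length cs'. cs'!k!i \<in> F)"
    proof (intro allI impI)
      fix i assume i: "i < length x" and nh: "\<forall>q. z!i \<noteq> Hat q"
        and pre: "(\<exists>q. x!i = Hat q) \<or> ((\<exists>q. x!i = Plain q) \<and> ((\<exists>j<length ls'. i \<in> snd (ls'!j)) \<or> (\<exists>q. z!i = Tilde q)))"
      have iy: "i < length y" using i ly by simp
      have "\<exists>k<length cs. cs!k!i \<in> F"
      proof (cases "i \<in> T")
        case True
        then have "z!i = lift (y!i) (proj (z!i))" using desc iy by blast
        from lift_cases[OF this] nh obtain r where r: "y!i = Tilde r" by blast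
        then show ?thesis using V1 i pre by auto
      next
        case False
        then have zy: "z!i = y!i" using desc iy by blast
        have "(\<exists>j<length ls'. i \<in> snd (ls'!j)) \<Longrightarrow> (\<exists>j<length ls. i \<in> snd (ls!j))"
        proof -
          assume "\<exists>j<length ls'. i \<in> snd (ls'!j)"
          then obtain j where j: "j < length ls'" "i \<in> snd (ls'!j)" by blast
          have "j \<noteq> length ls" using j False by (auto simp: ls'_def)
          then have "j < length ls" using j by (simp add: ls'_def)
          then show ?thesis using j by (auto simp: ls'_def nth_append)
        qed
        then show ?thesis using V1 i pre nh zy by auto
      qed
      then obtain k where "k < length cs" "cs!k!i \<in> F" by blast
      then show "\<exists>k<length cs'. cs'!k!i \<in> F"
        by (intro exI[of _ k]) (auto simp: cs'_def nth_append)
    qed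
    show ?thesis
      by (rule exI[of _ cs'], rule exI[of _ ls']) (use l2 hd2 last2 ly lz st2 V in auto)
  qed
qed

lemma proj_step2:
  assumes "step_type (inst_delta Q \<delta> F) x (Some a) T x'"
  shows "step_type \<delta> (map proj x) a T (map proj x') \<and> length x' = length x \<and>
    (\<forall>j<length x. (j \<in> T \<longrightarrow> (\<exists>p. x'!j = lift (x!j) p)) \<and> (j \<notin> T \<longrightarrow> x'!j = x!j))"
  using proj_step[OF assms] by blast

lemma cycle_bwd:
  assumes "(step (inst_delta Q \<delta> F))\<^sup>+\<^sup>+ (map Plain c) (map Plain c)"
  shows "good \<delta> F c c"
proof -
  from tranclpD[OF assms] obtain y1 where s1: "step (inst_delta Q \<delta> F) (map Plain c) y1"
    and r: "(step (inst_delta Q \<delta> F))\<^sup>*\<^sup>* y1 (map Plain c)" by blast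
  from s1 obtain a T where sty: "step_type (inst_delta Q \<delta> F) (map Plain c) a T y1"
    unfolding step_def by blast
  have "a \<noteq> None"
  proof
    assume "a = None"
    from none_step[OF sty[unfolded this]] obtain i where "i < length c"
      "(\<exists>q. map Plain c ! i = Hat q \<and> q \<in> F \<and> y1!i = Tilde q) \<or> (\<exists>q. map Plain c ! i = Tilde q \<and> y1!i = Plain q)"
      by auto
    then show False by auto
  qed
  then obtain b where b: "a = Some b" by blast
  from proj_step2[OF sty[unfolded b]] have sd0: "step_type \<delta> (map proj (map Plain c)) b T (map proj y1)"
    and ly0: "length y1 = length (map Plain c)"
    and D: "\<forall>j<length (map Plain c). (j \<in> T \<longrightarrow> (\<exists>p. y1!j = lift (map Plain c ! j) p)) \<and> (j \<notin> T \<longrightarrow> y1!j = map Plain c ! j)"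
    by blast+
  have sd: "step_type \<delta> c b T (map proj y1)" using sd0 by (simp only: map_proj_Plain)
  have ly1: "length y1 = length c" using ly0 by simp
  have y1H: "\<exists>q. y1!j = Hat q" if j: "j < length c" "j \<in> T" for j
  proof -
    obtain p where "y1!j = lift (map Plain c ! j) p" using D j by auto
    then show ?thesis using j by auto
  qed
  have y1P: "\<exists>q. y1!j = Plain q" if j: "j < length c" "j \<notin> T" for j
    using D j by auto
  have Tc: "T \<subseteq> {..<length c}" using step_type_facts[OF sd] by simp
  from conv[OF r] obtain cs ls where l1: "length cs = Suc (length ls)" and hd1: "hd cs = map proj y1"
    and last0: "last cs = map proj (map Plain c)"
    and st1: "\<forall>j<length ls. step_type \<delta> (cs!j) (fst (ls!j)) (snd (ls!j)) (cs!Suc j)"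
    and V1: "\<forall>i<length y1. (\<forall>q. map Plain c ! i \<noteq> Hat q) \<longrightarrow>
        ((\<exists>q. y1!i = Hat q) \<or> ((\<exists>q. y1!i = Plain q) \<and> ((\<exists>j<length ls. i \<in> snd (ls!j)) \<or> (\<exists>q. map Plain c ! i = Tilde q)))) \<longrightarrow>
        (\<exists>k<length cs. cs!k!i \<in> F)"
    by blast
  have last1: "last cs = c" using last0 by (simp only: map_proj_Plain)
  have csne: "cs \<noteq> []" using l1 by auto
  have cs0: "cs ! 0 = map proj y1" using hd1 csne by (simp add: hd_conv_nth)
  have lens: "k < length cs \<Longrightarrow> length (cs!k) = length c" for k
  proof (induction k)
    case 0 then show ?case using cs0 ly1 by simp
  next
    case (Suc k)
    then have "k < length ls" using l1 by simp
    then have "length (cs!Suc k) = length (cs!k)" using step_type_facts[OF st1[rule_format, OF \<open>k < length ls\<close>]] by simp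
    then show ?case using Suc by simp
  qed
  define cs' where "cs' = c # cs"
  define ls' where "ls' = (b, T) # ls"
  show ?thesis
    unfolding good_def
  proof (rule exI[of _ cs'], rule exI[of _ ls'], intro conjI)
    show "2 \<le> length cs'" using l1 by (simp add: cs'_def)
    show "length ls' = length cs' - 1" using l1 by (simp add: cs'_def ls'_def)
    show "hd cs' = c" by (simp add: cs'_def)
    show "last cs' = c" using last1 csne by (simp add: cs'_def)
    show "\<forall>j<length ls'. step_type \<delta> (cs'!j) (fst (ls'!j)) (snd (ls'!j)) (cs'!Suc j)"
    proof (intro allI impI)
      fix j assume j: "j < length ls'"
      show "step_type \<delta> (cs'!j) (fst (ls'!j)) (snd (ls'!j)) (cs'!Suc j)"
      proof (cases j)
        case 0 then show ?thesis using sd cs0 by (simp add: cs'_def ls'_def)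
      next
        case (Suc j') then show ?thesis using st1 j by (simp add: cs'_def ls'_def)
      qed
    qed
    show "\<forall>j<length ls'. \<forall>i\<in>snd (ls'!j). \<exists>k<length cs'. cs'!k!i \<in> F"
    proof (intro allI impI ballI)
      fix j i assume j: "j < length ls'" and i: "i \<in> snd (ls'!j)"
      have "i < length c \<and> ((\<exists>q. y1!i = Hat q) \<or> ((\<exists>q. y1!i = Plain q) \<and> (\<exists>j<length ls. i \<in> snd (ls!j))))"
      proof (cases j)
        case 0
        then have "i \<in> T" using i by (simp add: ls'_def)
        then show ?thesis using Tc y1H by auto
      next
        case (Suc j')
        then have j': "j' < length ls" "i \<in> snd (ls!j')" using i j by (auto simp: ls'_def)
        have "i < length (cs!j')" using step_type_facts[OF st1[rule_format, OF j'(1)]] j'(2) by auto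
        then have ic: "i < length c" using lens[of j'] j'(1) l1 by simp
        then show ?thesis using j' y1H y1P by blast
      qed
      then have "\<exists>k<length cs. cs!k!i \<in> F" using V1 ly1 by auto
      then obtain k where "k < length cs" "cs!k!i \<in> F" by blast
      then show "\<exists>k<length cs'. cs'!k!i \<in> F"
        by (intro exI[of _ "Suc k"]) (simp add: cs'_def)
    qed
  qed
qed

lemma cycle_fwd:
  assumes good: "good \<delta> F c c" and cQ: "set c \<subseteq> Q"
  shows "(step (inst_delta Q \<delta> F))\<^sup>+\<^sup>+ (map Plain c) (map Plain c)"
proof -
  from good obtain cs ls where g2: "length cs \<ge> 2" and gl: "length ls = length cs - 1"
    and hd1: "hd cs = c" and last1: "last cs = c"
    and st0: "\<forall>j<length ls. step_type \<delta> (cs!j) (fst (ls!j)) (snd (ls!j)) (cs!Suc j)"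
    and gF: "\<forall>j<length ls. \<forall>i\<in>snd (ls!j). \<exists>k<length cs. cs!k!i \<in> F"
    unfolding good_def by blast
  define n where "n = length ls"
  define Tp where "Tp m = snd (ls!m)" for m
  have n0: "0 < n" and lcs: "length cs = Suc n" using g2 gl by (auto simp: n_def)
  have st: "step_type \<delta> (cs!m) (fst (ls!m)) (Tp m) (cs!Suc m)" if "m < n" for m
    using st0 that by (simp add: n_def Tp_def)
  have csne: "cs \<noteq> []" using lcs by auto
  have cs0: "cs!0 = c" using hd1 csne by (simp add: hd_conv_nth)
  have csn: "cs!n = c" using last1 csne lcs by (simp add: last_conv_nth)
  have lens: "m \<le> n \<Longrightarrow> length (cs!m) = length c" for m
  proof (induction m)
    case 0 show ?case using cs0 by simp
  next
    case (Suc m) then have m: "m < n" by simp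
    then have "length (cs!Suc m) = length (cs!m)" using step_type_facts[OF st[OF m]] by simp
    then show ?case using Suc by simp
  qed
  have const: "i < length c \<Longrightarrow> k \<le> n \<Longrightarrow> (\<forall>m<k. i \<notin> Tp m) \<Longrightarrow> cs!k!i = c!i" for i k
  proof (induction k)
    case 0 show ?case using cs0 by simp
  next
    case (Suc k)
    then have k: "k < n" by simp
    have ik: "i < length (cs!k)" using lens[of k] k Suc.prems by simp
    have "i \<notin> Tp k" using Suc.prems(3) by simp
    then have "cs!k!i = cs!Suc k!i" using step_type_facts[OF st[OF k]] ik by blast
    then show ?case using Suc by simp
  qed
  define inv where "inv j x \<longleftrightarrow> length x = length c \<and> map proj x = cs!j \<and>
     (\<forall>i<length c. (\<exists>q. x!i = Plain q) \<longleftrightarrow> (\<forall>m<j. i \<notin> Tp m)) \<and>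
     (\<forall>i<length c. \<forall>q. x!i = Hat q \<longrightarrow> (\<forall>k\<le>j. cs!k!i \<in> F \<longrightarrow> (\<forall>m<k. i \<notin> Tp m)))" for j x
  let ?S = "step (inst_delta Q \<delta> F)"
  have main: "j \<le> n \<Longrightarrow> \<exists>x. ?S\<^sup>*\<^sup>* (map Plain c) x \<and> (0 < j \<longrightarrow> ?S\<^sup>+\<^sup>+ (map Plain c) x) \<and> inv j x" for j
  proof (induction j)
    case 0
    show ?case by (rule exI[of _ "map Plain c"]) (simp add: inv_def cs0 comp_def)
  next
    case (Suc j)
    then have j: "j < n" by simp
    from Suc.IH j obtain x where rx: "?S\<^sup>*\<^sup>* (map Plain c) x" and ix: "inv j x" by auto
    have lx: "length x = length c" and px: "map proj x = cs!j"
      and Pl: "\<forall>i<length c. (\<exists>q. x!i = Plain q) \<longleftrightarrow> (\<forall>m<j. i \<notin> Tp m)"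
      and Ht: "\<forall>i<length c. \<forall>q. x!i = Hat q \<longrightarrow> (\<forall>k\<le>j. cs!k!i \<in> F \<longrightarrow> (\<forall>m<k. i \<notin> Tp m))"
      using ix unfolding inv_def by blast+
    have sj: "step_type \<delta> (map proj x) (fst (ls!j)) (Tp j) (cs!Suc j)" using st[OF j] px by simp
    define x' where "x' = map (\<lambda>i. if i \<in> Tp j then lift (x!i) (cs!Suc j!i) else x!i) [0..<length x]"
    from lift_step[OF sj, of Q F] have s': "step_type (inst_delta Q \<delta> F) x (Some (fst (ls!j))) (Tp j) x'"
      and p': "map proj x' = cs!Suc j"
      unfolding x'_def by blast+
    have lx': "length x' = length x" by (simp add: x'_def)
    have nx': "x'!i = (if i \<in> Tp j then lift (x!i) (cs!Suc j!i) else x!i)" if "i < length x" for i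
      using that by (simp add: x'_def)
    define x'' where "x'' = map (ggr F) x'"
    have r'': "?S\<^sup>*\<^sup>* x' x''" unfolding x''_def by (rule gr_steps)
    have plus: "?S\<^sup>+\<^sup>+ (map Plain c) x''"
    proof -
      have "?S x x'" using s' unfolding step_def by blast
      with rx have "?S\<^sup>+\<^sup>+ (map Plain c) x'" by (rule rtranclp_into_tranclp1)
      then show ?thesis using r'' by (rule tranclp_rtranclp_tranclp)
    qed
    have "inv (Suc j) x''"
      unfolding inv_def
    proof (intro conjI allI impI)
      show "length x'' = length c" using lx lx' by (simp add: x''_def)
      show "map proj x'' = cs!Suc j" using p' by (simp add: x''_def comp_def)
    next
      fix i assume i: "i < length c"
      have ix: "i < length x" using i lx by simp
      have x''i: "x''!i = ggr F (x'!i)" using ix lx' by (simp add: x''_def)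
      have "(\<exists>q. x''!i = Plain q) \<longleftrightarrow> (\<exists>q. x'!i = Plain q)" using x''i by (cases "x'!i") (auto simp: ggr_def)
      also have "\<dots> \<longleftrightarrow> (i \<notin> Tp j \<and> (\<exists>q. x!i = Plain q))" using nx'[OF ix] by auto
      also have "\<dots> \<longleftrightarrow> (\<forall>m<Suc j. i \<notin> Tp m)" using Pl i by (auto simp: less_Suc_eq)
      finally show "(\<exists>q. x''!i = Plain q) \<longleftrightarrow> (\<forall>m<Suc j. i \<notin> Tp m)" .
    next
      fix i q k m0 assume i: "i < length c" and hq: "x''!i = Hat q" and k: "k \<le> Suc j" and kF: "cs!k!i \<in> F"
        and m0: "m0 < k"
      have ix: "i < length x" using i lx by simp
      have x''i: "x''!i = ggr F (x'!i)" using ix lx' by (simp add: x''_def)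
      have x'H: "x'!i = Hat q \<and> q \<notin> F" using hq x''i by (cases "x'!i") (auto simp: ggr_def split: if_splits)
      have "proj (x'!i) = cs!Suc j!i" using p' ix lx' by (metis nth_map)
      then have "cs!Suc j!i = q" using x'H by simp
      then have "k \<noteq> Suc j" using kF x'H by auto
      then have kj: "k \<le> j" using k by simp
      have "\<forall>m<k. i \<notin> Tp m"
      proof (cases "i \<in> Tp j")
        case True
        then have "lift (x!i) (cs!Suc j!i) = Hat q" using nx'[OF ix] x'H by simp
        then consider (P) p where "x!i = Plain p" | (H) p where "x!i = Hat p" by (cases "x!i") auto
        then show ?thesis
        proof cases
          case P then have "\<forall>m<j. i \<notin> Tp m" using Pl i by blast
          then show ?thesis using kj by auto
        next
          case H then show ?thesis using Ht i kj kF by blast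
        qed
      next
        case False
        then have "x!i = Hat q" using nx'[OF ix] x'H by simp
        then show ?thesis using Ht i kj kF by blast
      qed
      then show "i \<notin> Tp m0" using m0 by blast
    qed
    moreover have "?S\<^sup>*\<^sup>* (map Plain c) x''" using plus by (rule tranclp_into_rtranclp)
    ultimately show ?case using plus by blast
  qed
  have ex: "\<exists>x. ?S\<^sup>*\<^sup>* (map Plain c) x \<and> (0 < n \<longrightarrow> ?S\<^sup>+\<^sup>+ (map Plain c) x) \<and> inv n x"
    using main[of n] by simp
  then obtain x where B: "0 < n \<longrightarrow> ?S\<^sup>+\<^sup>+ (map Plain c) x" and ix: "inv n x" by blast
  have plus: "?S\<^sup>+\<^sup>+ (map Plain c) x" using B n0 by simp
  have lx: "length x = length c" and px: "map proj x = cs!n"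
    and Pl: "\<forall>i<length c. (\<exists>q. x!i = Plain q) \<longleftrightarrow> (\<forall>m<n. i \<notin> Tp m)"
    and Ht: "\<forall>i<length c. \<forall>q. x!i = Hat q \<longrightarrow> (\<forall>k\<le>n. cs!k!i \<in> F \<longrightarrow> (\<forall>m<k. i \<notin> Tp m))"
    using ix unfolding inv_def by blast+
  have noH: "x!i \<noteq> Hat q" if i: "i < length c" for i q
  proof
    assume h: "x!i = Hat q"
    then have "\<not> (\<forall>m<n. i \<notin> Tp m)" using Pl i by auto
    then obtain m where m: "m < n" "i \<in> Tp m" by auto
    then obtain k where k: "k < length cs" "cs!k!i \<in> F" using gF by (auto simp: n_def Tp_def)
    have kn: "k \<le> n" using k lcs by simp
    have "\<forall>m<k. i \<notin> Tp m" using Ht i h kn k(2) by blast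
    then have "cs!k!i = c!i" using const[OF i kn] by blast
    then have "cs!n!i \<in> F" using k csn by simp
    then have "\<forall>m<n. i \<notin> Tp m" using Ht i h by blast
    then show False using m by blast
  qed
  have "map (gfin Q) x = map Plain c"
  proof (rule nth_equalityI)
    show "length (map (gfin Q) x) = length (map Plain c)" using lx by simp
    fix i assume "i < length (map (gfin Q) x)"
    then have i: "i < length c" using lx by simp
    have pi: "proj (x!i) = c!i" using px csn i lx by (metis nth_map)
    have "c!i \<in> Q" using cQ i by auto
    then show "map (gfin Q) x ! i = map Plain c ! i"
      using noH[OF i] i pi lx by (cases "x!i") (auto simp: gfin_def)
  qed
  then have "?S\<^sup>*\<^sup>* x (map Plain c)" using fin_steps[of Q \<delta> F x] by simp
  with plus show ?thesis by (rule tranclp_rtranclp_tranclp)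
qed

theorem lemma7:
  fixes Q :: "'q set" and D :: "'d set" and I :: "'q set"
    and \<delta> :: "('q \<times> 'd bop \<times> 'q) set" and F :: "'q set"
    and c0 c :: "'q list"
  assumes "finite Q" and "finite D" and "I \<subseteq> Q"
    and "\<delta> \<subseteq> Q \<times> Ops D \<times> Q"
    and "F \<subseteq> Q"
    and "set c0 \<subseteq> Q" and "set c \<subseteq> Q" and "length c0 = length c"
  shows "((step \<delta>)\<^sup>*\<^sup>* c0 c \<and> good \<delta> F c c) \<longleftrightarrow>
         ((step (inst_delta Q \<delta> F))\<^sup>*\<^sup>* (map Tilde c0) (map Plain c) \<and>
          (step (inst_delta Q \<delta> F))\<^sup>+\<^sup>+ (map Plain c) (map Plain c))"
proof
  assume L: "(step \<delta>)\<^sup>*\<^sup>* c0 c \<and> good \<delta> F c c"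
  have r1: "(step (inst_delta Q \<delta> F))\<^sup>*\<^sup>* (map Tilde c0) (map Tilde c)"
    using tilde_run[of \<delta> c0 c Q F] L by blast
  have r2: "(step (inst_delta Q \<delta> F))\<^sup>*\<^sup>* (map Tilde c) (map (gfin Q) (map Tilde c))"
    by (rule fin_steps)
  have eq: "map (gfin Q) (map Tilde c) = map Plain c" using assms(7) by (auto simp: gfin_def)
  have "(step (inst_delta Q \<delta> F))\<^sup>*\<^sup>* (map Tilde c0) (map Plain c)"
    using rtranclp_trans[OF r1 r2] unfolding eq .
  moreover have "(step (inst_delta Q \<delta> F))\<^sup>+\<^sup>+ (map Plain c) (map Plain c)"
    using cycle_fwd[of \<delta> F c Q] L assms(7) by blast
  ultimately show "(step (inst_delta Q \<delta> F))\<^sup>*\<^sup>* (map Tilde c0) (map Plain c) \<and>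
          (step (inst_delta Q \<delta> F))\<^sup>+\<^sup>+ (map Plain c) (map Plain c)" by blast
next
  assume R: "(step (inst_delta Q \<delta> F))\<^sup>*\<^sup>* (map Tilde c0) (map Plain c) \<and>
          (step (inst_delta Q \<delta> F))\<^sup>+\<^sup>+ (map Plain c) (map Plain c)"
  have "(step \<delta>)\<^sup>*\<^sup>* (map proj (map Tilde c0)) (map proj (map Plain c))"
    using proj_run[of Q \<delta> F] R by blast
  then have "(step \<delta>)\<^sup>*\<^sup>* c0 c" by (simp only: map_proj_Tilde map_proj_Plain)
  moreover have "good \<delta> F c c" using cycle_bwd[of Q \<delta> F c] R by blast
  ultimately show "(step \<delta>)\<^sup>*\<^sup>* c0 c \<and> good \<delta> F c c" by blast
qed

end
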